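(* For any finite, connected, pointed, edge-ordered graph $G$ with distinguished vertex $v_0$, the graph $S(G)$ (defined below) is an arborescence.
   Context: A (directed) graph is $(V,\to)$ with $\to\subseteq V\times V$; $N(u)$ is the set of outgoing edges of $u$. A pointed graph has a distinguished vertex $v_0$; connected means every vertex is reachable by a path from $v_0$. A path is a finite sequence $v_1\to\cdots\to v_n$ of vertices joined by edges, with length $|\pi|$; co-initial paths share their source; $\pi\sqsubset\sigma$ means $\pi$ is a proper prefix of $\sigma$. A finite edge-ordered graph is a finite graph with a strict linear order $\triangleleft$ on each neighborhood. Lexicographic path order: if $\pi\sqsubset\sigma$ then $\pi\prec\sigma$ (symmetrically); otherwise, with $\zeta$ the longest common prefix, $u$ its target and $v_1,v_2$ the next vertices, $\pi\prec\sigma$ iff $u\to v_1\triangleleft u\to v_2$. $\min^s(u\rightsquigarrow v)$ is the lexicographically least shortest path from $u$ to $v$. An arborescence is a pointed graph such that for every vertex $u$ there is a unique path $v_0\rightsquigarrow u$. $S(G)$ is the graph with the vertices and distinguished vertex of $G$, containing an edge $u\to v$ iff $u\to v$ is an edge of the path $\min^s(v_0\rightsquigarrow v)$ in $G$, with co-initial edges ordered as in $G$. *)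

theory Defs
  imports Main
begin

text \<open>An edge order is given by ord, where ord u v1 v2 means that the edge u -> v1
  precedes the edge u -> v2 in the order on the neighbourhood N(u).\<close>

definition finite_edge_ordered_graph ::
  "'v set \<Rightarrow> ('v \<Rightarrow> 'v \<Rightarrow> bool) \<Rightarrow> ('v \<Rightarrow> 'v \<Rightarrow> 'v \<Rightarrow> bool) \<Rightarrow> bool" where
  "finite_edge_ordered_graph V E ord \<longleftrightarrow>
     finite V \<and> (\<forall>u v. E u v \<longrightarrow> u \<in> V \<and> v \<in> V) \<and>
     (\<forall>u. (\<forall>v. E u v \<longrightarrow> \<not> ord u v v) \<and>
          (\<forall>a b c. E u a \<and> E u b \<and> E u c \<and> ord u a b \<and> ord u b c \<longrightarrow> ord u a c) \<and>
          (\<forall>a b. E u a \<and> E u b \<and> a \<noteq> b \<longrightarrow> ord u a b \<or> ord u b a))"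

definition is_path :: "'v set \<Rightarrow> ('v \<Rightarrow> 'v \<Rightarrow> bool) \<Rightarrow> 'v list \<Rightarrow> bool" where
  "is_path V E p \<longleftrightarrow> p \<noteq> [] \<and> set p \<subseteq> V \<and>
     (\<forall>i. Suc i < length p \<longrightarrow> E (p ! i) (p ! Suc i))"

definition path_from_to :: "'v set \<Rightarrow> ('v \<Rightarrow> 'v \<Rightarrow> bool) \<Rightarrow> 'v \<Rightarrow> 'v \<Rightarrow> 'v list \<Rightarrow> bool" where
  "path_from_to V E u v p \<longleftrightarrow> is_path V E p \<and> hd p = u \<and> last p = v"

definition path_len :: "'v list \<Rightarrow> nat" where
  "path_len p = length p - 1"

definition connected_from :: "'v set \<Rightarrow> ('v \<Rightarrow> 'v \<Rightarrow> bool) \<Rightarrow> 'v \<Rightarrow> bool" where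
  "connected_from V E v0 \<longleftrightarrow> (\<forall>v\<in>V. \<exists>p. path_from_to V E v0 v p)"

definition path_less :: "('v \<Rightarrow> 'v \<Rightarrow> 'v \<Rightarrow> bool) \<Rightarrow> 'v list \<Rightarrow> 'v list \<Rightarrow> bool" where
  "path_less ord p q \<longleftrightarrow>
     (\<exists>r. r \<noteq> [] \<and> q = p @ r) \<or>
     (\<exists>z v1 v2 r1 r2. z \<noteq> [] \<and> v1 \<noteq> v2 \<and> p = z @ v1 # r1 \<and> q = z @ v2 # r2 \<and>
         ord (last z) v1 v2)"

definition shortest_path :: "'v set \<Rightarrow> ('v \<Rightarrow> 'v \<Rightarrow> bool) \<Rightarrow> 'v \<Rightarrow> 'v \<Rightarrow> 'v list \<Rightarrow> bool" where
  "shortest_path V E u v p \<longleftrightarrow> path_from_to V E u v p \<and>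
     (\<forall>q. path_from_to V E u v q \<longrightarrow> path_len p \<le> path_len q)"

text \<open>min^s(u ~> v): the lexicographically least shortest path from u to v.\<close>

definition min_short_path ::
  "'v set \<Rightarrow> ('v \<Rightarrow> 'v \<Rightarrow> bool) \<Rightarrow> ('v \<Rightarrow> 'v \<Rightarrow> 'v \<Rightarrow> bool) \<Rightarrow> 'v \<Rightarrow> 'v \<Rightarrow> 'v list" where
  "min_short_path V E ord u v = (THE p. shortest_path V E u v p \<and>
     (\<forall>q. shortest_path V E u v q \<and> q \<noteq> p \<longrightarrow> path_less ord p q))"

text \<open>Edge relation of S(G): u -> v is an edge iff it is an edge of min^s(v0 ~> v).
  (S(G) has the same vertex set V and distinguished vertex v0; the order on co-initial
  edges is inherited from G and plays no role for being an arborescence.)\<close>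

definition S_edges ::
  "'v set \<Rightarrow> ('v \<Rightarrow> 'v \<Rightarrow> bool) \<Rightarrow> ('v \<Rightarrow> 'v \<Rightarrow> 'v \<Rightarrow> bool) \<Rightarrow> 'v \<Rightarrow> 'v \<Rightarrow> 'v \<Rightarrow> bool" where
  "S_edges V E ord v0 u v \<longleftrightarrow> E u v \<and> v \<in> V \<and>
     (let p = min_short_path V E ord v0 v in
        \<exists>i. Suc i < length p \<and> p ! i = u \<and> p ! Suc i = v)"

definition arborescence :: "'v set \<Rightarrow> ('v \<Rightarrow> 'v \<Rightarrow> bool) \<Rightarrow> 'v \<Rightarrow> bool" where
  "arborescence V E v0 \<longleftrightarrow> v0 \<in> V \<and> (\<forall>u\<in>V. \<exists>!p. path_from_to V E v0 u p)"

end

theory Submission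
  imports Defs
begin

lemma is_path_mid_edge:
  assumes "is_path V E (z @ a # r)" "z \<noteq> []"
  shows "E (last z) a"
proof -
  have "Suc (length z - 1) < length (z @ a # r)" using assms(2) by simp
  then have "E ((z @ a # r) ! (length z - 1)) ((z @ a # r) ! Suc (length z - 1))"
    using assms(1) by (simp add: is_path_def)
  moreover have "(z @ a # r) ! (length z - 1) = last z"
    using assms(2) by (simp add: nth_append last_conv_nth)
  moreover have "(z @ a # r) ! Suc (length z - 1) = a"
    using assms(2) by (simp add: nth_append)
  ultimately show ?thesis by simp
qed

lemma is_path_take:
  assumes "is_path V E p" "0 < k"
  shows "is_path V E (take k p)"
  using assms unfolding is_path_def
  by (auto dest: in_set_takeD)

lemma is_path_snoc:
  assumes "is_path V E p" "E (last p) v" "v \<in> V"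
  shows "is_path V E (p @ [v])"
  unfolding is_path_def
proof (intro conjI allI impI)
  show "p @ [v] \<noteq> []" by simp
  show "set (p @ [v]) \<subseteq> V" using assms by (auto simp: is_path_def)
next
  fix i assume i: "Suc i < length (p @ [v])"
  show "E ((p @ [v]) ! i) ((p @ [v]) ! Suc i)"
  proof (cases "Suc i < length p")
    case True
    then show ?thesis using assms(1) by (simp add: nth_append is_path_def)
  next
    case False
    then have "i = length p - 1" "p \<noteq> []" using i assms(1) by (auto simp: is_path_def)
    then show ?thesis using assms(2) False
      by (simp add: nth_append last_conv_nth)
  qed
qed

lemma is_path_last_edge:
  assumes "is_path V E p" "2 \<le> length p"
  shows "E (p ! (length p - 2)) (last p)"
proof -
  have "Suc (length p - 2) < length p" using assms(2) by simp
  then have "E (p ! (length p - 2)) (p ! Suc (length p - 2))"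
    using assms(1) by (simp add: is_path_def)
  moreover have "Suc (length p - 2) = length p - 1" using assms(2) by simp
  moreover have "p \<noteq> []" using assms(2) by auto
  ultimately show ?thesis by (simp add: last_conv_nth)
qed

lemma butlast_path:
  assumes "path_from_to V E u v p" "2 \<le> length p"
  shows "path_from_to V E u (p ! (length p - 2)) (butlast p)"
proof -
  have "is_path V E (take (length p - 1) p)"
    using assms by (intro is_path_take) (auto simp: path_from_to_def)
  moreover have "hd (butlast p) = hd p" using assms(2)
    by (cases p; cases "tl p") auto
  moreover have "last (butlast p) = p ! (length p - 2)"
  proof -
    have "butlast p \<noteq> []" using assms(2) by (cases p; cases "tl p") auto
    then show ?thesis using assms(2) by (simp add: last_conv_nth nth_butlast numeral_2_eq_2)
  qed
  ultimately show ?thesis using assms by (simp add: path_from_to_def butlast_conv_take)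
qed

lemma finite_min_rel:
  assumes "finite P" "P \<noteq> {}" "P \<subseteq> Q"
    and tr: "\<And>a b c. a \<in> Q \<Longrightarrow> b \<in> Q \<Longrightarrow> c \<in> Q \<Longrightarrow> R a b \<Longrightarrow> R b c \<Longrightarrow> R a c"
    and tot: "\<And>a b. a \<in> Q \<Longrightarrow> b \<in> Q \<Longrightarrow> a \<noteq> b \<Longrightarrow> R a b \<or> R b a"
  shows "\<exists>m\<in>P. \<forall>q\<in>P. q \<noteq> m \<longrightarrow> R m q"
  using assms(1,2,3)
proof (induction P rule: finite_ne_induct)
  case (singleton x) then show ?case by simp
next
  case (insert x F)
  then obtain m where m: "m \<in> F" "\<forall>q\<in>F. q \<noteq> m \<longrightarrow> R m q" by auto
  have xQ: "x \<in> Q" and FQ: "F \<subseteq> Q" using insert by auto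
  have "x \<noteq> m" using insert m by auto
  then consider "R x m" | "R m x" using tot xQ FQ m by blast
  then show ?case
  proof cases
    case 1
    then show ?thesis using m tr xQ FQ by (metis insert_iff subsetD)
  next
    case 2
    then show ?thesis using m by auto
  qed
qed

lemma path_less_irrefl: "\<not> path_less ord p p"
  by (auto simp: path_less_def)

lemma path_less_eq_len:
  assumes "length p = length q" "path_less ord p q"
  shows "\<exists>z a b r1 r2. z \<noteq> [] \<and> a \<noteq> b \<and> p = z @ a # r1 \<and> q = z @ b # r2 \<and> ord (last z) a b"
  using assms by (auto simp: path_less_def)

lemma first_diff:
  "length p = length q \<Longrightarrow> p \<noteq> q \<Longrightarrow> \<exists>z a b r1 r2. a \<noteq> b \<and> p = z @ a # r1 \<and> q = z @ b # r2"
proof (induction p arbitrary: q)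
  case Nil then show ?case by simp
next
  case (Cons x p)
  then obtain y q' where q: "q = y # q'" by (cases q) auto
  show ?case
  proof (cases "x = y")
    case True
    then have "p \<noteq> q'" "length p = length q'" using Cons q by auto
    then obtain z a b r1 r2 where "a \<noteq> b \<and> p = z @ a # r1 \<and> q' = z @ b # r2"
      using Cons.IH by blast
    then show ?thesis using q True by (metis append_Cons)
  next
    case False
    then show ?thesis using q by (metis append_Nil)
  qed
qed

lemma split_cmp:
  assumes "z @ b # r2 = w @ c # s1"
  shows "(z = w \<and> b = c) \<or> (\<exists>w'. w = z @ b # w') \<or> (\<exists>z'. z = w @ c # z')"
proof -
  from assms obtain us where "(z = w @ us \<and> us @ b # r2 = c # s1) \<or> (z @ us = w \<and> b # r2 = us @ c # s1)"
    by (auto simp: append_eq_append_conv2)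
  then show ?thesis by (cases us) auto
qed


context
  fixes V :: "'v set" and E :: "'v \<Rightarrow> 'v \<Rightarrow> bool" and ord :: "'v \<Rightarrow> 'v \<Rightarrow> 'v \<Rightarrow> bool"
    and v0 :: 'v
  assumes G: "finite_edge_ordered_graph V E ord"
    and v0V: "v0 \<in> V"
    and conn: "connected_from V E v0"
begin

lemma EV: "E u v \<Longrightarrow> u \<in> V \<and> v \<in> V"
  using G by (simp add: finite_edge_ordered_graph_def)

lemma ord_irr: "E u a \<Longrightarrow> \<not> ord u a a"
  using G by (simp add: finite_edge_ordered_graph_def)

lemma ord_tr: "E u a \<Longrightarrow> E u b \<Longrightarrow> E u c \<Longrightarrow> ord u a b \<Longrightarrow> ord u b c \<Longrightarrow> ord u a c"
  using G unfolding finite_edge_ordered_graph_def by blast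

lemma ord_tot: "E u a \<Longrightarrow> E u b \<Longrightarrow> a \<noteq> b \<Longrightarrow> ord u a b \<or> ord u b a"
  using G unfolding finite_edge_ordered_graph_def by blast

lemma pl_trans:
  assumes "is_path V E p" "is_path V E q" "is_path V E r" "length p = length q" "length q = length r"
    "path_less ord p q" "path_less ord q r"
  shows "path_less ord p r"
proof -
  obtain z a b r1 r2 where A: "z \<noteq> []" "a \<noteq> b" "p = z @ a # r1" "q = z @ b # r2" "ord (last z) a b"
    using path_less_eq_len[OF assms(4,6)] by blast
  obtain w c d s1 s2 where B: "w \<noteq> []" "c \<noteq> d" "q = w @ c # s1" "r = w @ d # s2" "ord (last w) c d"
    using path_less_eq_len[OF assms(5,7)] by blast
  have "z @ b # r2 = w @ c # s1" using A B by simp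
  from split_cmp[OF this] consider "z = w \<and> b = c" | w' where "w = z @ b # w'" | z' where "z = w @ c # z'"
    by blast
  then show ?thesis
  proof cases
    case 1
    have e1: "E (last z) a" using is_path_mid_edge[of V E z a r1] assms(1) A by simp
    have e2: "E (last z) b" using is_path_mid_edge[of V E z b r2] assms(2) A by simp
    have e3: "E (last z) d" using is_path_mid_edge[of V E z d s2] assms(3) A B 1 by simp
    have o: "ord (last z) a d" using ord_tr[OF e1 e2 e3] A B 1 by simp
    moreover have "a \<noteq> d" using ord_irr[OF e1] o by auto
    ultimately show ?thesis unfolding path_less_def using A B 1 by blast
  next
    case (2 w')
    have "r = z @ b # (w' @ d # s2)" using B 2 by simp
    then show ?thesis unfolding path_less_def using A 2 B by auto
  next
    case (3 z')
    have "p = w @ c # (z' @ a # r1)" using A 3 by simp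
    then show ?thesis unfolding path_less_def using B by blast
  qed
qed

lemma pl_total:
  assumes "is_path V E p" "is_path V E q" "length p = length q" "hd p = hd q" "p \<noteq> q"
  shows "path_less ord p q \<or> path_less ord q p"
proof -
  obtain z a b r1 r2 where A: "a \<noteq> b" "p = z @ a # r1" "q = z @ b # r2"
    using first_diff[OF assms(3,5)] by blast
  have z: "z \<noteq> []"
  proof
    assume "z = []"
    then show False using A assms(4) by simp
  qed
  have e1: "E (last z) a" using is_path_mid_edge[of V E z a r1] assms(1) A z by simp
  have e2: "E (last z) b" using is_path_mid_edge[of V E z b r2] assms(2) A z by simp
  from ord_tot[OF e1 e2 A(1)] show ?thesis
  proof
    assume "ord (last z) a b"
    then have "path_less ord p q" unfolding path_less_def
      using A z by (intro disjI2 exI[of _ z] exI[of _ a] exI[of _ b] exI[of _ r1] exI[of _ r2]) auto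
    then show ?thesis ..
  next
    assume "ord (last z) b a"
    then have "path_less ord q p" unfolding path_less_def
      using A z by (intro disjI2 exI[of _ z] exI[of _ b] exI[of _ a] exI[of _ r2] exI[of _ r1]) auto
    then show ?thesis ..
  qed
qed

lemma sp_len:
  assumes "shortest_path V E v0 v p" "shortest_path V E v0 v q"
  shows "length p = length q"
proof -
  have "path_len p \<le> path_len q" using assms unfolding shortest_path_def by blast
  moreover have "path_len q \<le> path_len p" using assms unfolding shortest_path_def by blast
  ultimately have "path_len p = path_len q" by (rule antisym)
  moreover have "p \<noteq> []" "q \<noteq> []" using assms
    by (auto simp: shortest_path_def path_from_to_def is_path_def)
  then have "0 < length p" "0 < length q" by auto
  ultimately show ?thesis unfolding path_len_def by arith
qed

lemma sp_exists:
  assumes "v \<in> V" shows "\<exists>p. shortest_path V E v0 v p"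
proof -
  obtain p0 where p0: "path_from_to V E v0 v p0" using conn assms unfolding connected_from_def by blast
  define P where "P n \<longleftrightarrow> (\<exists>p. path_from_to V E v0 v p \<and> path_len p = n)" for n
  have "P (path_len p0)" unfolding P_def using p0 by blast
  then have "\<exists>n. P n" by blast
  then obtain n where n: "P n" and min: "\<forall>m<n. \<not> P m"
    unfolding exists_least_iff[of P] by blast
  then obtain p where p: "path_from_to V E v0 v p" "path_len p = n" unfolding P_def by blast
  have "n \<le> path_len q" if "path_from_to V E v0 v q" for q
  proof (rule ccontr)
    assume "\<not> n \<le> path_len q"
    then have "path_len q < n" by simp
    moreover have "P (path_len q)" unfolding P_def using that by blast
    ultimately show False using min by blast
  qed
  then show ?thesis using p unfolding shortest_path_def by auto
qed

lemma sp_finite: "finite {p. shortest_path V E v0 v p}"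
proof (cases "{p. shortest_path V E v0 v p} = {}")
  case True then show ?thesis by simp
next
  case False
  then obtain p0 where p0: "shortest_path V E v0 v p0" by auto
  have "{p. shortest_path V E v0 v p} \<subseteq> {xs. set xs \<subseteq> V \<and> length xs \<le> length p0}"
  proof clarify
    fix p assume p: "shortest_path V E v0 v p"
    show "set p \<subseteq> V \<and> length p \<le> length p0" using sp_len[OF p p0] p
      by (auto simp: shortest_path_def path_from_to_def is_path_def)
  qed
  moreover have "finite {xs. set xs \<subseteq> V \<and> length xs \<le> length p0}"
    using finite_lists_length_le G unfolding finite_edge_ordered_graph_def by blast
  ultimately show ?thesis by (rule finite_subset)
qed

lemma sp_pl_trans:
  assumes "shortest_path V E v0 v a" "shortest_path V E v0 v b" "shortest_path V E v0 v c"
    "path_less ord a b" "path_less ord b c"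
  shows "path_less ord a c"
proof -
  have "is_path V E a" "is_path V E b" "is_path V E c"
    using assms by (auto simp: shortest_path_def path_from_to_def)
  moreover have "length a = length b" "length b = length c" using sp_len assms by blast+
  ultimately show ?thesis using pl_trans assms(4,5) by blast
qed

lemma msp_sp:
  assumes "v \<in> V" shows "shortest_path V E v0 v (min_short_path V E ord v0 v)"
proof -
  let ?P = "{p. shortest_path V E v0 v p}"
  have ne: "?P \<noteq> {}" using sp_exists assms by auto
  have "\<exists>m\<in>?P. \<forall>q\<in>?P. q \<noteq> m \<longrightarrow> path_less ord m q"
  proof (rule finite_min_rel[OF sp_finite ne subset_refl])
    fix a b c assume "a \<in> ?P" "b \<in> ?P" "c \<in> ?P" "path_less ord a b" "path_less ord b c"
    then show "path_less ord a c" using sp_pl_trans[of v a b c] by simp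
  next
    fix a b assume ab: "a \<in> ?P" "b \<in> ?P" "a \<noteq> b"
    have "is_path V E a" "is_path V E b" "hd a = hd b"
      using ab by (auto simp: shortest_path_def path_from_to_def)
    moreover have "length a = length b" using sp_len ab by blast
    ultimately show "path_less ord a b \<or> path_less ord b a" using pl_total[of a b] ab(3) by simp
  qed
  then obtain m where m: "shortest_path V E v0 v m"
    "\<forall>q. shortest_path V E v0 v q \<and> q \<noteq> m \<longrightarrow> path_less ord m q" by blast
  have "min_short_path V E ord v0 v = m"
    unfolding min_short_path_def
  proof (rule the_equality)
    show "shortest_path V E v0 v m \<and> (\<forall>q. shortest_path V E v0 v q \<and> q \<noteq> m \<longrightarrow> path_less ord m q)"
      using m by blast
  next
    fix p assume p: "shortest_path V E v0 v p \<and>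
        (\<forall>q. shortest_path V E v0 v q \<and> q \<noteq> p \<longrightarrow> path_less ord p q)"
    show "p = m"
    proof (rule ccontr)
      assume "p \<noteq> m"
      then have "path_less ord p m" "path_less ord m p" using p m by blast+
      then have "path_less ord p p" using sp_pl_trans[of v p m p] p m(1) by simp
      then show False using path_less_irrefl[of ord p] by simp
    qed
  qed
  then show ?thesis using m by simp
qed

lemma sp_only_end:
  assumes "shortest_path V E v0 v p" "j < length p - 1"
  shows "p ! j \<noteq> v"
proof
  assume pj: "p ! j = v"
  have pf: "path_from_to V E v0 v p" using assms(1) by (simp add: shortest_path_def)
  have "is_path V E (take (Suc j) p)" using pf is_path_take by (auto simp: path_from_to_def)
  moreover have "hd (take (Suc j) p) = v0" using pf assms(2)
    by (cases p) (auto simp: path_from_to_def)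
  moreover have "last (take (Suc j) p) = v" using pj assms(2)
    by (simp add: take_Suc_conv_app_nth)
  ultimately have "path_from_to V E v0 v (take (Suc j) p)" by (simp add: path_from_to_def)
  then have "path_len p \<le> path_len (take (Suc j) p)" using assms(1) unfolding shortest_path_def by blast
  then show False using assms(2) by (simp add: path_len_def)
qed

lemma S_char:
  assumes "S_edges V E ord v0 u v"
  shows "v \<noteq> v0 \<and> v \<in> V \<and> 2 \<le> length (min_short_path V E ord v0 v) \<and>
    u = min_short_path V E ord v0 v ! (length (min_short_path V E ord v0 v) - 2)"
proof -
  let ?p = "min_short_path V E ord v0 v"
  from assms have v: "v \<in> V" and "\<exists>i. Suc i < length ?p \<and> ?p ! i = u \<and> ?p ! Suc i = v"
    unfolding S_edges_def Let_def by auto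
  then obtain i where i: "Suc i < length ?p" "?p ! i = u" "?p ! Suc i = v" by blast
  have sp: "shortest_path V E v0 v ?p" using msp_sp v by blast
  have "\<not> Suc i < length ?p - 1" using sp_only_end[OF sp] i by blast
  then have si: "Suc i = length ?p - 1" using i by arith
  have "hd ?p = v0" using sp by (simp add: shortest_path_def path_from_to_def)
  moreover have "?p \<noteq> []" using i by auto
  ultimately have h0: "?p ! 0 = v0" by (simp add: hd_conv_nth)
  have "v \<noteq> v0"
  proof
    assume "v = v0"
    then show False using sp_only_end[OF sp, of 0] h0 i by simp
  qed
  moreover have "i = length ?p - 2" using si by arith
  ultimately show ?thesis using v i by auto
qed

lemma parent:
  assumes "v \<in> V" "v \<noteq> v0"
  shows "2 \<le> length (min_short_path V E ord v0 v) \<and>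
    S_edges V E ord v0 (min_short_path V E ord v0 v ! (length (min_short_path V E ord v0 v) - 2)) v \<and>
    path_len (min_short_path V E ord v0 (min_short_path V E ord v0 v ! (length (min_short_path V E ord v0 v) - 2)))
      < path_len (min_short_path V E ord v0 v)"
proof -
  let ?p = "min_short_path V E ord v0 v"
  let ?u = "?p ! (length ?p - 2)"
  have sp: "shortest_path V E v0 v ?p" using msp_sp assms(1) by blast
  then have pf: "path_from_to V E v0 v ?p" by (simp add: shortest_path_def)
  have len: "2 \<le> length ?p" using pf assms(2)
    by (cases ?p; cases "tl ?p") (auto simp: path_from_to_def is_path_def)
  have lastp: "last ?p = v" using pf by (simp add: path_from_to_def)
  have E: "E ?u v" using is_path_last_edge[of V E ?p] pf len lastp by (simp add: path_from_to_def)
  have nv: "?p ! Suc (length ?p - 2) = v"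
  proof -
    have "Suc (length ?p - 2) = length ?p - 1" using len by arith
    moreover have "last ?p = ?p ! (length ?p - 1)" using len by (intro last_conv_nth) auto
    ultimately show ?thesis using lastp by simp
  qed
  have S: "S_edges V E ord v0 ?u v" unfolding S_edges_def Let_def
    using E assms(1) len nv by (intro conjI exI[of _ "length ?p - 2"]) auto
  have bp: "path_from_to V E v0 ?u (butlast ?p)" using butlast_path[OF pf len] .
  have uV: "?u \<in> V" using EV[OF E] by blast
  have "path_len (min_short_path V E ord v0 ?u) \<le> path_len (butlast ?p)"
    using msp_sp[OF uV] bp unfolding shortest_path_def by blast
  moreover have "path_len (butlast ?p) < path_len ?p" using len by (simp add: path_len_def)
  ultimately show ?thesis using len S by simp
qed

lemma S_exists:
  "v \<in> V \<Longrightarrow> \<exists>p. path_from_to V (S_edges V E ord v0) v0 v p"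
proof (induction "path_len (min_short_path V E ord v0 v)" arbitrary: v rule: less_induct)
  case less
  show ?case
  proof (cases "v = v0")
    case True
    have "path_from_to V (S_edges V E ord v0) v0 v [v0]" using True v0V
      by (simp add: path_from_to_def is_path_def)
    then show ?thesis by blast
  next
    case False
    let ?p = "min_short_path V E ord v0 v"
    let ?u = "?p ! (length ?p - 2)"
    have P: "S_edges V E ord v0 ?u v"
      "path_len (min_short_path V E ord v0 ?u) < path_len ?p"
      using parent[OF less.prems False] by auto
    have uV: "?u \<in> V" using P(1) EV unfolding S_edges_def by blast
    obtain q where q: "path_from_to V (S_edges V E ord v0) v0 ?u q"
      using less.hyps[OF P(2) uV] by blast
    have "is_path V (S_edges V E ord v0) (q @ [v])"
      using is_path_snoc[of V "S_edges V E ord v0" q v] q P(1) less.prems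
      by (simp add: path_from_to_def)
    moreover have "q \<noteq> []" using q by (simp add: path_from_to_def is_path_def)
    ultimately have "path_from_to V (S_edges V E ord v0) v0 v (q @ [v])"
      using q by (simp add: path_from_to_def)
    then show ?thesis by blast
  qed
qed

lemma S_unique:
  "path_from_to V (S_edges V E ord v0) v0 u p \<Longrightarrow> path_from_to V (S_edges V E ord v0) v0 u q \<Longrightarrow> p = q"
proof (induction "length p" arbitrary: u p q rule: less_induct)
  case less
  let ?S = "S_edges V E ord v0"
  have no_into: "\<not> ?S x v0" for x using S_char by blast
  have "q \<noteq> []" "p \<noteq> []" using less.prems by (auto simp: path_from_to_def is_path_def)
  then have "0 < length q" "0 < length p" by auto
  then have lq: "length q = 1 \<or> 2 \<le> length q" and lp: "length p = 1 \<or> 2 \<le> length p"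
    by linarith+
  have single: "r = [v0] \<and> u = v0" if "path_from_to V ?S v0 u r" "length r = 1" for r
  proof -
    obtain x where "r = [x]" using \<open>length r = 1\<close> by (cases r) auto
    then show ?thesis using that by (auto simp: path_from_to_def)
  qed
  have lastS: "?S (r ! (length r - 2)) u" if "path_from_to V ?S v0 u r" "2 \<le> length r" for r
    using is_path_last_edge[of V ?S r] that by (simp add: path_from_to_def)
  show ?case
  proof (cases "length p = 1")
    case True
    then have pp: "p = [v0]" "u = v0" using single less.prems(1) by auto
    have "\<not> 2 \<le> length q" using lastS[OF less.prems(2)] pp no_into by blast
    then have "q = [v0]" using lq single less.prems(2) by blast
    then show ?thesis using pp by simp
  next
    case False
    then have two: "2 \<le> length p" using lp by blast
    have ep: "?S (p ! (length p - 2)) u" using lastS[OF less.prems(1) two] .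
    have cu: "u \<noteq> v0" "p ! (length p - 2) = min_short_path V E ord v0 u ! (length (min_short_path V E ord v0 u) - 2)"
      using S_char[OF ep] by auto
    have twoq: "2 \<le> length q" using lq single less.prems(2) cu(1) by blast
    have eq: "?S (q ! (length q - 2)) u" using lastS[OF less.prems(2) twoq] .
    have cq: "q ! (length q - 2) = min_short_path V E ord v0 u ! (length (min_short_path V E ord v0 u) - 2)"
      using S_char[OF eq] by auto
    have bp: "path_from_to V ?S v0 (p ! (length p - 2)) (butlast p)" using butlast_path[OF less.prems(1) two] .
    have bq: "path_from_to V ?S v0 (p ! (length p - 2)) (butlast q)" using butlast_path[OF less.prems(2) twoq] cu cq by simp
    have "length (butlast p) < length p" using two by simp
    then have "butlast p = butlast q" by (rule less.hyps[OF _ bp bq])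
    moreover have "last p = last q" using less.prems by (simp add: path_from_to_def)
    moreover have "p \<noteq> []" "q \<noteq> []" using two twoq by auto
    ultimately show ?thesis by (metis append_butlast_last_id)
  qed
qed

end

theorem lemma10p5:
  fixes V :: "'v set" and E :: "'v \<Rightarrow> 'v \<Rightarrow> bool" and ord :: "'v \<Rightarrow> 'v \<Rightarrow> 'v \<Rightarrow> bool"
    and v0 :: 'v
  assumes "finite_edge_ordered_graph V E ord"
    and "v0 \<in> V"
    and "connected_from V E v0"
  shows "arborescence V (S_edges V E ord v0) v0"
  unfolding arborescence_def
proof (intro conjI ballI)
  show "v0 \<in> V" using assms(2) .
  fix u assume "u \<in> V"
  then obtain p where p: "path_from_to V (S_edges V E ord v0) v0 u p"
    using S_exists[OF assms] by blast
  show "\<exists>!p. path_from_to V (S_edges V E ord v0) v0 u p"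
  proof (rule ex1I[of _ p])
    show "path_from_to V (S_edges V E ord v0) v0 u p" by (rule p)
    fix q assume "path_from_to V (S_edges V E ord v0) v0 u q"
    then show "q = p" using S_unique[OF assms _ p] by blast
  qed
qed

end
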